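(* Let $\Lambda,r,\alpha$ be positive integers with $\alpha=\Lambda-r$ and $r\in[\Lambda-1]$. For the MADC model with combinatorial topology (CT) with $\Lambda$ mapper nodes, $K=\binom{\Lambda}{\alpha}$ reducer nodes and computation load $r$, the achievable communication load $L(r,\alpha)=\frac{\binom{\Lambda-\alpha}{r}}{\binom{\Lambda}{r}(\binom{r+\alpha}{r}-1)}$ coincides with the lower bound $L^{lb}_{new}(r)$ (taking $K_\alpha=1$ and $K_{\alpha'}=0$ for $\alpha'\neq\alpha$), both being equal to $$\frac{1}{\binom{r+\alpha}{r}\left(\binom{r+\alpha}{r}-1\right)}.$$ Hence this communication load is optimal for the CT model (in the homogeneous setting where every file is stored at exactly $r$ mapper nodes) when $\alpha=\Lambda-r$.
   Context: Notation: $[n]=\{1,\dots,n\}$. Combinatorial topology (CT): $\binom{\Lambda}{r}$ batches $B_T$, $T\subset[0,\Lambda)$, $|T|=r$; mapper node $\lambda$ stores $B_T$ iff $\lambda\in T$; one reducer node for each $\alpha$-subset $U$ of the $\Lambda$ mapper nodes, connected exactly to the mappers in $U$, each reducer computing $Q/K$ disjoint output functions; the communication load is the total number of broadcast bits divided by $QNt$, where $N$ is the number of files and $t$ the IV length. $L^{lb}_{new}(r)=\frac{\sum_{\alpha'\in[\Lambda-r]}K_{\alpha'}\binom{\Lambda-r}{\alpha'}}{K\sum_{\alpha'\in[\Lambda-r]}K_{\alpha'}(\binom{\Lambda}{\alpha'}-\binom{\Lambda-r}{\alpha'})}$ is the lower bound on the optimal communication load for MADC models with GC-MRG connectivity (for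 each $\alpha'\in[\Lambda-r]$ and each $\alpha'$-subset of mappers, $K_{\alpha'}$ reducer nodes connected exactly to it; $K=\sum_{\alpha'}K_{\alpha'}\binom{\Lambda}{\alpha'}$) in which every file is stored at exactly $r$ mapper nodes. *)

theory Defs
  imports Complex_Main
begin

definition L_ach :: "nat \<Rightarrow> nat \<Rightarrow> nat \<Rightarrow> real" where
  "L_ach Lam r \<alpha> =
     real (Lam - \<alpha> choose r) / (real (Lam choose r) * (real (r + \<alpha> choose r) - 1))"

definition K_total :: "nat \<Rightarrow> nat \<Rightarrow> (nat \<Rightarrow> nat) \<Rightarrow> nat" where
  "K_total Lam r Kf = (\<Sum>a\<in>{1..Lam - r}. Kf a * (Lam choose a))"

definition L_lb_new :: "nat \<Rightarrow> nat \<Rightarrow> (nat \<Rightarrow> nat) \<Rightarrow> real" where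
  "L_lb_new Lam r Kf =
     (\<Sum>a\<in>{1..Lam - r}. real (Kf a) * real (Lam - r choose a)) /
     (real (K_total Lam r Kf) *
      (\<Sum>a\<in>{1..Lam - r}. real (Kf a) * (real (Lam choose a) - real (Lam - r choose a))))"

end

theory Submission
  imports Defs
begin

theorem corollary2:
  fixes Lam r \<alpha> :: nat
  assumes "1 \<le> r" and "r \<le> Lam - 1" and "0 < \<alpha>" and "\<alpha> = Lam - r"
  defines "Kf \<equiv> (\<lambda>a. if a = \<alpha> then 1 else 0 :: nat)"
  shows "K_total Lam r Kf = Lam choose \<alpha>
    \<and> L_ach Lam r \<alpha> = L_lb_new Lam r Kf
    \<and> L_ach Lam r \<alpha> =
        1 / (real (r + \<alpha> choose r) * (real (r + \<alpha> choose r) - 1))"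
proof -
  have L: "Lam = r + \<alpha>" using assms by linarith
  have mem: "\<alpha> \<in> {1..Lam - r}" using assms by auto
  have s2: "(\<Sum>a\<in>{1..Lam - r}. Kf a * (Lam choose a)) = Lam choose \<alpha>"
  proof -
    have "(\<Sum>a\<in>{1..Lam - r}. Kf a * (Lam choose a)) = (\<Sum>a\<in>{1..Lam - r}. if a = \<alpha> then Lam choose a else 0)"
      by (rule sum.cong) (auto simp: Kf_def)
    also have "\<dots> = Lam choose \<alpha>" using mem by (simp add: sum.delta)
    finally show ?thesis .
  qed
  have K: "K_total Lam r Kf = Lam choose \<alpha>" unfolding K_total_def using s2 .
  have sym: "Lam choose r = Lam choose \<alpha>" using L binomial_symmetric[of r Lam] by simp
  have c1: "Lam - \<alpha> choose r = 1" using L by simp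
  have c2: "Lam - r choose \<alpha> = 1" using L by simp
  have num: "(\<Sum>a\<in>{1..Lam - r}. real (Kf a) * real (Lam - r choose a)) = 1"
  proof -
    have "(\<Sum>a\<in>{1..Lam - r}. real (Kf a) * real (Lam - r choose a)) = (\<Sum>a\<in>{1..Lam - r}. if a = \<alpha> then real (Lam - r choose a) else 0)"
      by (rule sum.cong) (auto simp: Kf_def)
    also have "\<dots> = 1" using mem c2 by (simp add: sum.delta)
    finally show ?thesis .
  qed
  have den: "(\<Sum>a\<in>{1..Lam - r}. real (Kf a) * (real (Lam choose a) - real (Lam - r choose a)))
     = real (Lam choose \<alpha>) - 1"
  proof -
    have "(\<Sum>a\<in>{1..Lam - r}. real (Kf a) * (real (Lam choose a) - real (Lam - r choose a))) = (\<Sum>a\<in>{1..Lam - r}. if a = \<alpha> then (real (Lam choose a) - real (Lam - r choose a)) else 0)"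
      by (rule sum.cong) (auto simp: Kf_def)
    also have "\<dots> = real (Lam choose \<alpha>) - 1" using mem c2 by (simp add: sum.delta)
    finally show ?thesis .
  qed
  have A: "L_ach Lam r \<alpha> = 1 / (real (Lam choose \<alpha>) * (real (Lam choose \<alpha>) - 1))"
    unfolding L_ach_def using c1 sym L by (simp add: add.commute)
  have B: "L_lb_new Lam r Kf = 1 / (real (Lam choose \<alpha>) * (real (Lam choose \<alpha>) - 1))"
    unfolding L_lb_new_def K num den by simp
  have C: "r + \<alpha> choose r = Lam choose \<alpha>" using sym L by simp
  show ?thesis using K A B C by simp
qed

end
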